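(* Let $X$ be a Tychonoff space and $n\in\mathbb N$. Then $C_p(X,\mathbb R^n)$ is strictly H-bounded iff it is H-bounded iff it is strictly M-bounded iff it is M-bounded iff $X$ is pseudocompact. On the other hand, for every nonempty Tychonoff space $X$, $C_p(X,\mathbb R^\omega)$ is not H-bounded.
   Context: $C_p(X,Y)$ for a topological group $Y$ denotes the group of continuous maps $X\to Y$ under pointwise operation with the topology of pointwise convergence; $\mathbb R^\omega$ carries the product topology. For a topological group $G$ with identity $e$: M-bounded means for every sequence $(U_n)$ of neighborhoods of $e$ there are finite $A_n\subset G$ with $G=\bigcup_nA_nU_n$; H-bounded means there are finite $A_n$ with each $x\in G$ in all but finitely many $A_nU_n$. In the game where in round $n$ ONE picks a neighborhood $U_n$ of $e$ and TWO a finite $A_n\subset G$, $G$ is strictly M-bounded (resp. strictly H-bounded) if TWO has a strategy guaranteeing $G=\bigcup_nA_nU_n$ (resp. each $x\in G$ lies in all but finitely many $A_nU_n$). *)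

theory Defs
  imports "HOL-Analysis.Analysis" "HOL-Library.Function_Algebras"
begin

definition tychonoff_space :: "'a topology \<Rightarrow> bool" where
  "tychonoff_space X \<longleftrightarrow> completely_regular_space X \<and> t1_space X"

definition pseudocompact :: "'a topology \<Rightarrow> bool" where
  "pseudocompact X \<longleftrightarrow>
     (\<forall>f. continuous_map X euclideanreal f \<longrightarrow> bounded (f ` topspace X))"

text \<open>Generic notions for a topological group given by its topology T (carrier = topspace T),
  group operation op and identity e.\<close>

definition nbhd_e :: "'g topology \<Rightarrow> 'g \<Rightarrow> 'g set \<Rightarrow> bool" where
  "nbhd_e T e U \<longleftrightarrow> U \<subseteq> topspace T \<and> (\<exists>W. openin T W \<and> e \<in> W \<and> W \<subseteq> U)"

definition set_op :: "('g \<Rightarrow> 'g \<Rightarrow> 'g) \<Rightarrow> 'g set \<Rightarrow> 'g set \<Rightarrow> 'g set" where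
  "set_op op A U = {op a u | a u. a \<in> A \<and> u \<in> U}"

definition M_bounded :: "'g topology \<Rightarrow> ('g \<Rightarrow> 'g \<Rightarrow> 'g) \<Rightarrow> 'g \<Rightarrow> bool" where
  "M_bounded T op e \<longleftrightarrow>
     (\<forall>U::nat \<Rightarrow> 'g set. (\<forall>n. nbhd_e T e (U n)) \<longrightarrow>
        (\<exists>A. (\<forall>n. finite (A n) \<and> A n \<subseteq> topspace T) \<and>
             topspace T = (\<Union>n. set_op op (A n) (U n))))"

definition H_bounded :: "'g topology \<Rightarrow> ('g \<Rightarrow> 'g \<Rightarrow> 'g) \<Rightarrow> 'g \<Rightarrow> bool" where
  "H_bounded T op e \<longleftrightarrow>
     (\<forall>U::nat \<Rightarrow> 'g set. (\<forall>n. nbhd_e T e (U n)) \<longrightarrow>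
        (\<exists>A. (\<forall>n. finite (A n) \<and> A n \<subseteq> topspace T) \<and>
             (\<forall>x\<in>topspace T. eventually (\<lambda>n. x \<in> set_op op (A n) (U n)) sequentially)))"

text \<open>Strategies of player TWO: a map from the history of ONE's moves
  (U_0, ..., U_n) to TWO's finite set A_n.\<close>

definition two_strategy :: "'g topology \<Rightarrow> 'g \<Rightarrow> ('g set list \<Rightarrow> 'g set) \<Rightarrow> bool" where
  "two_strategy T e \<sigma> \<longleftrightarrow>
     (\<forall>us. (\<forall>u\<in>set us. nbhd_e T e u) \<longrightarrow> finite (\<sigma> us) \<and> \<sigma> us \<subseteq> topspace T)"

definition strictly_M_bounded :: "'g topology \<Rightarrow> ('g \<Rightarrow> 'g \<Rightarrow> 'g) \<Rightarrow> 'g \<Rightarrow> bool" where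
  "strictly_M_bounded T op e \<longleftrightarrow>
     (\<exists>\<sigma>. two_strategy T e \<sigma> \<and>
        (\<forall>U::nat \<Rightarrow> 'g set. (\<forall>n. nbhd_e T e (U n)) \<longrightarrow>
           topspace T = (\<Union>n. set_op op (\<sigma> (map U [0..<Suc n])) (U n))))"

definition strictly_H_bounded :: "'g topology \<Rightarrow> ('g \<Rightarrow> 'g \<Rightarrow> 'g) \<Rightarrow> 'g \<Rightarrow> bool" where
  "strictly_H_bounded T op e \<longleftrightarrow>
     (\<exists>\<sigma>. two_strategy T e \<sigma> \<and>
        (\<forall>U::nat \<Rightarrow> 'g set. (\<forall>n. nbhd_e T e (U n)) \<longrightarrow>
           (\<forall>x\<in>topspace T.
              eventually (\<lambda>n. x \<in> set_op op (\<sigma> (map U [0..<Suc n])) (U n)) sequentially)))"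

text \<open>C_p(X,Y): continuous maps X \<rightarrow> Y (as extensional functions on topspace X),
  with the topology of pointwise convergence (subspace of the product topology)
  and pointwise addition; identity is the constant zero map.\<close>

definition Cp :: "'a topology \<Rightarrow> ('a \<Rightarrow> 'b::{topological_space,ab_group_add}) topology" where
  "Cp X = subtopology (product_topology (\<lambda>_. euclidean) (topspace X))
            {f. continuous_map X euclidean f \<and> f \<in> extensional (topspace X)}"

definition Cp_add :: "'a topology \<Rightarrow> ('a \<Rightarrow> 'b::ab_group_add) \<Rightarrow> ('a \<Rightarrow> 'b) \<Rightarrow> ('a \<Rightarrow> 'b)" where
  "Cp_add X f g = restrict (\<lambda>x. f x + g x) (topspace X)"

definition Cp_zero :: "'a topology \<Rightarrow> ('a \<Rightarrow> 'b::ab_group_add)" where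
  "Cp_zero X = restrict (\<lambda>x. 0) (topspace X)"

end

theory Submission
  imports Defs
begin

lemma topspace_Cp:
  "topspace (Cp X :: ('a \<Rightarrow> 'b::{topological_space,ab_group_add}) topology)
     = {f. continuous_map X euclidean f \<and> f \<in> extensional (topspace X)}"
  unfolding Cp_def by (auto simp: PiE_def)

lemma Cp_add_in:
  fixes a u :: "'a \<Rightarrow> 'b::real_normed_vector"
  assumes "a \<in> topspace (Cp X)" "u \<in> topspace (Cp X)"
  shows "Cp_add X a u \<in> topspace (Cp X)"
proof -
  have "continuous_map X euclidean (\<lambda>x. a x + u x)"
    using assms by (auto simp: topspace_Cp intro: continuous_map_add)
  then have "continuous_map X euclidean (Cp_add X a u)"
    by (rule continuous_map_eq) (simp add: Cp_add_def)
  then show ?thesis by (simp add: topspace_Cp Cp_add_def)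
qed

lemma set_op_sub:
  fixes A U :: "('a \<Rightarrow> 'b::real_normed_vector) set"
  assumes "A \<subseteq> topspace (Cp X)" "U \<subseteq> topspace (Cp X)"
  shows "set_op (Cp_add X) A U \<subseteq> topspace (Cp X)"
  using assms Cp_add_in unfolding set_op_def by blast

lemma eval_cont:
  assumes "z \<in> topspace X"
  shows "continuous_map (Cp X :: ('a \<Rightarrow> 'b::{topological_space,ab_group_add}) topology) euclidean (\<lambda>g. g z)"
  unfolding Cp_def
  by (rule continuous_map_from_subtopology) (rule continuous_map_product_projection[where X="\<lambda>_. euclidean", simplified, OF assms])

lemma nbhd_eval:
  fixes P :: "'b::{topological_space,ab_group_add} \<Rightarrow> bool"
  assumes "z \<in> topspace X" "open {v. P v}" "P 0"
  shows "nbhd_e (Cp X :: ('a \<Rightarrow> 'b) topology) (Cp_zero X) {g \<in> topspace (Cp X). P (g z)}"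
proof -
  have "openin (Cp X) {g \<in> topspace (Cp X). (\<lambda>g. g z) g \<in> {v. P v}}"
    by (rule openin_continuous_map_preimage[OF eval_cont[OF assms(1)]]) (use assms in auto)
  moreover have "Cp_zero X \<in> topspace (Cp X :: ('a \<Rightarrow> 'b) topology)"
    by (simp add: topspace_Cp Cp_zero_def continuous_map_eq[OF continuous_map_const[THEN iffD2]])
  ultimately show ?thesis using assms unfolding nbhd_e_def
    by (auto simp: Cp_zero_def)
qed

lemma nbhd_basic:
  fixes U :: "('a \<Rightarrow> 'b::real_normed_vector) set"
  assumes "nbhd_e (Cp X) (Cp_zero X) U"
  shows "\<exists>F e. finite F \<and> F \<subseteq> topspace X \<and> e > 0 \<and>
           (\<forall>g\<in>topspace (Cp X). (\<forall>x\<in>F. norm (g x) < e) \<longrightarrow> g \<in> U)"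
proof -
  obtain W where W: "openin (Cp X) W" "Cp_zero X \<in> W" "W \<subseteq> U"
    using assms unfolding nbhd_e_def by blast
  obtain W' where W': "openin (product_topology (\<lambda>_. euclidean) (topspace X)) W'"
      "W = W' \<inter> {f. continuous_map X euclidean f \<and> f \<in> extensional (topspace X)}"
    using W(1) unfolding Cp_def openin_subtopology by blast
  have "Cp_zero X \<in> W'" using W W' by auto
  then obtain V where V: "finite {i \<in> topspace X. V i \<noteq> UNIV}"
      "\<forall>i\<in>topspace X. open (V i)" "Cp_zero X \<in> Pi\<^sub>E (topspace X) V"
      "Pi\<^sub>E (topspace X) V \<subseteq> W'"
    using W'(1) unfolding openin_product_topology_alt by auto
  define F where "F = {i \<in> topspace X. V i \<noteq> UNIV}"
  have "\<forall>i\<in>F. \<exists>e>0. ball 0 e \<subseteq> V i"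
  proof
    fix i assume "i \<in> F"
    then have "open (V i)" "0 \<in> V i" using V unfolding F_def by (auto simp: Cp_zero_def)
    then show "\<exists>e>0. ball 0 e \<subseteq> V i" using open_contains_ball by blast
  qed
  then obtain ee where ee: "\<forall>i\<in>F. ee i > 0 \<and> ball 0 (ee i) \<subseteq> V i" by metis
  define e where "e = Min (insert 1 (ee ` F))"
  have fin: "finite F" using V F_def by simp
  have epos: "e > 0" unfolding e_def using fin ee by (auto)
  have ele: "\<forall>i\<in>F. e \<le> ee i" unfolding e_def using fin by auto
  show ?thesis
  proof (intro exI conjI)
    show "finite F" "F \<subseteq> topspace X" "e > 0" using fin epos F_def by auto
    show "\<forall>g\<in>topspace (Cp X). (\<forall>x\<in>F. norm (g x) < e) \<longrightarrow> g \<in> U"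
    proof (intro ballI impI)
      fix g :: "'a \<Rightarrow> 'b" assume g: "g \<in> topspace (Cp X)" "\<forall>x\<in>F. norm (g x) < e"
      have "g \<in> Pi\<^sub>E (topspace X) V"
      proof -
        have "g i \<in> V i" if "i \<in> topspace X" for i
        proof (cases "i \<in> F")
          case True
          then have "norm (g i) < ee i" using g ele by fastforce
          moreover have "g i \<in> ball 0 (ee i)" using calculation by (simp add: dist_norm)
          ultimately show ?thesis using ee True by blast
        next
          case False then show ?thesis using that F_def by auto
        qed
        then show ?thesis using g(1) by (auto simp: topspace_Cp PiE_def)
      qed
      then show "g \<in> U" using V W W' g(1) by (auto simp: topspace_Cp)
    qed
  qed
qed

lemma floor_close:
  fixes u v k :: real
  assumes "k > 0" "\<lfloor>k * u\<rfloor> = \<lfloor>k * v\<rfloor>"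
  shows "\<bar>u - v\<bar> \<le> 1 / k"
proof -
  have "\<bar>k * u - k * v\<bar> < 1"
    using assms(2) of_int_floor_le[of "k * u"] of_int_floor_le[of "k * v"]
      real_of_int_floor_add_one_gt[of "k * u"] real_of_int_floor_add_one_gt[of "k * v"]
    by (simp only:; linarith)
  then have "k * \<bar>u - v\<bar> < 1" using assms(1) by (simp add: abs_mult flip: right_diff_distrib)
  then show ?thesis using assms(1) by (simp add: field_simps)
qed

lemma grid:
  fixes B :: "('a \<Rightarrow> real^'n) set" and F :: "'a set"
  assumes fin: "finite F" and e: "e > 0" and bd: "\<forall>f\<in>B. \<forall>x\<in>F. norm (f x) \<le> N"
  shows "\<exists>A. finite A \<and> A \<subseteq> B \<and> (\<forall>f\<in>B. \<exists>a\<in>A. \<forall>x\<in>F. norm (f x - a x) < e)"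
proof -
  define k :: real where "k = (real CARD('n) + 1) / e"
  have kpos: "k > 0" using e by (simp add: k_def)
  have ck: "real CARD('n) * (1 / k) < e"
    using e by (simp add: k_def field_simps)
  define key where "key f = (\<lambda>x\<in>F. (\<lambda>i. \<lfloor>k * (f x $ i)\<rfloor>))" for f :: "'a \<Rightarrow> real^'n"
  define M :: int where "M = \<lceil>k * N\<rceil> + 1"
  have keyin: "key ` B \<subseteq> Pi\<^sub>E F (\<lambda>_. Pi\<^sub>E UNIV (\<lambda>_. {-M..M}))"
  proof
    fix y assume "y \<in> key ` B"
    then obtain f where f: "f \<in> B" "y = key f" by blast
    have "\<lfloor>k * (f x $ i)\<rfloor> \<in> {-M..M}" if "x \<in> F" for x i
    proof -
      have "\<bar>f x $ i\<bar> \<le> N" using bd f(1) that component_le_norm_cart[of "f x" i] by fastforce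
      then have "\<bar>k * (f x $ i)\<bar> \<le> k * N" using kpos by (simp add: abs_mult)
      then have lo: "- (k*N) \<le> k * (f x $ i)" "k * (f x $ i) \<le> k * N" by linarith+
      have Mr: "real_of_int M = real_of_int \<lceil>k*N\<rceil> + 1" "real_of_int (-M) = - real_of_int M" by (simp_all add: M_def)
      have "real_of_int \<lfloor>k * (f x $ i)\<rfloor> \<le> real_of_int M"
           "real_of_int (-M) \<le> real_of_int \<lfloor>k * (f x $ i)\<rfloor>"
        using of_int_floor_le[of "k * (f x $ i)"] real_of_int_floor_add_one_gt[of "k * (f x $ i)"]
          le_of_int_ceiling[of "k*N"] lo Mr by linarith+
      then show ?thesis by (simp only: of_int_le_iff atLeastAtMost_iff) 
    qed
    then show "y \<in> Pi\<^sub>E F (\<lambda>_. Pi\<^sub>E UNIV (\<lambda>_. {-M..M}))" using f by (auto simp: key_def)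
  qed
  have "finite (Pi\<^sub>E F (\<lambda>_. Pi\<^sub>E (UNIV::'n set) (\<lambda>_. {-M..M})))"
    using fin by (intro finite_PiE) auto
  then have finK: "finite (key ` B)" using keyin finite_subset by blast
  define rep where "rep y = (SOME f. f \<in> B \<and> key f = y)" for y
  have rep: "rep (key f) \<in> B \<and> key (rep (key f)) = key f" if "f \<in> B" for f
    unfolding rep_def by (rule someI[of _ f]) (use that in auto)
  show ?thesis
  proof (intro exI conjI)
    show "finite (rep ` key ` B)" using finK by simp
    show "rep ` key ` B \<subseteq> B" using rep by auto
    show "\<forall>f\<in>B. \<exists>a\<in>rep ` key ` B. \<forall>x\<in>F. norm (f x - a x) < e"
    proof
      fix f assume f: "f \<in> B"
      let ?a = "rep (key f)"
      have "\<forall>x\<in>F. norm (f x - ?a x) < e"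
      proof
        fix x assume x: "x \<in> F"
        have "\<lfloor>k * (f x $ i)\<rfloor> = \<lfloor>k * (?a x $ i)\<rfloor>" for i
        proof -
          have "key f x i = key ?a x i" using rep[OF f] by simp
          then show ?thesis using x by (simp add: key_def)
        qed
        then have c: "\<bar>(f x - ?a x) $ i\<bar> \<le> 1 / k" for i
          using floor_close[OF kpos] by simp
        have "norm (f x - ?a x) \<le> (\<Sum>i\<in>UNIV. \<bar>(f x - ?a x) $ i\<bar>)" by (rule norm_le_l1_cart)
        also have "\<dots> \<le> real (card (UNIV::'n set)) * (1 / k)"
          by (rule sum_bounded_above) (use c in auto)
        finally show "norm (f x - ?a x) < e" using ck by simp
      qed
      then show "\<exists>a\<in>rep ` key ` B. \<forall>x\<in>F. norm (f x - a x) < e" using f by blast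
    qed
  qed
qed

lemma Cp_diff_in:
  fixes f a :: "'a \<Rightarrow> 'b::real_normed_vector"
  assumes "f \<in> topspace (Cp X)" "a \<in> topspace (Cp X)"
  shows "restrict (\<lambda>x. f x - a x) (topspace X) \<in> topspace (Cp X)"
proof -
  have "continuous_map X euclidean (\<lambda>x. f x - a x)"
    using assms by (auto simp: topspace_Cp intro: continuous_map_diff)
  then have "continuous_map X euclidean (restrict (\<lambda>x. f x - a x) (topspace X))"
    by (rule continuous_map_eq) simp
  then show ?thesis by (simp add: topspace_Cp)
qed

lemma cover:
  fixes U :: "('a \<Rightarrow> real^'n) set"
  assumes "nbhd_e (Cp X) (Cp_zero X) U"
  shows "\<exists>A. finite A \<and> A \<subseteq> topspace (Cp X) \<and>
    (\<forall>f\<in>topspace (Cp X). (\<forall>x\<in>topspace X. norm (f x) \<le> N) \<longrightarrow> f \<in> set_op (Cp_add X) A U)"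
proof -
  obtain F e where Fe: "finite F" "F \<subseteq> topspace X" "e > 0"
    "\<forall>g\<in>topspace (Cp X). (\<forall>x\<in>F. norm (g x) < e) \<longrightarrow> g \<in> U"
    using nbhd_basic[OF assms] by blast
  define B :: "('a \<Rightarrow> real^'n) set" where "B = {f\<in>topspace (Cp X). \<forall>x\<in>topspace X. norm (f x) \<le> N}"
  have bdB: "\<forall>f\<in>B. \<forall>x\<in>F. norm (f x) \<le> N" using Fe(2) B_def by auto
  obtain A where A: "finite A" "A \<subseteq> B" "\<forall>f\<in>B. \<exists>a\<in>A. \<forall>x\<in>F. norm (f x - a x) < e"
    using grid[OF Fe(1) Fe(3) bdB] by blast
  show ?thesis
  proof (intro exI conjI ballI impI)
    show "finite A" "A \<subseteq> topspace (Cp X)" using A B_def by auto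
    fix f :: "'a \<Rightarrow> real^'n" assume f: "f \<in> topspace (Cp X)" "\<forall>x\<in>topspace X. norm (f x) \<le> N"
    then have "f \<in> B" by (simp add: B_def)
    then obtain a where a: "a \<in> A" "\<forall>x\<in>F. norm (f x - a x) < e" using A by blast
    have aT: "a \<in> topspace (Cp X)" using a A B_def by auto
    define u where "u = restrict (\<lambda>x. f x - a x) (topspace X)"
    have uT: "u \<in> topspace (Cp X)" unfolding u_def by (rule Cp_diff_in[OF f(1) aT])
    have "\<forall>x\<in>F. norm (u x) < e" using a Fe(2) by (auto simp: u_def)
    then have "u \<in> U" using Fe(4) uT by blast
    moreover have "Cp_add X a u = f"
    proof
      fix x show "Cp_add X a u x = f x"
        using f(1) by (cases "x \<in> topspace X") (auto simp: Cp_add_def u_def topspace_Cp extensional_def)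
    qed
    ultimately show "f \<in> set_op (Cp_add X) A U" using a(1) unfolding set_op_def
      by (intro CollectI exI[of _ a] exI[of _ u]) simp
  qed
qed

lemma pseudo_sH:
  assumes "pseudocompact X"
  shows "strictly_H_bounded (Cp X :: ('a \<Rightarrow> real^'n) topology) (Cp_add X) (Cp_zero X)"
proof -
  define P where "P us A \<longleftrightarrow> finite A \<and> A \<subseteq> topspace (Cp X) \<and>
      (nbhd_e (Cp X) (Cp_zero X) (last us) \<longrightarrow>
        (\<forall>f\<in>topspace (Cp X). (\<forall>x\<in>topspace X. norm (f x) \<le> real (length us))
           \<longrightarrow> f \<in> set_op (Cp_add X) A (last us)))"
    for us :: "('a \<Rightarrow> real^'n) set list" and A
  define \<sigma> where "\<sigma> us = (SOME A. P us A)" for us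
  have ex: "\<exists>A. P us A" for us
  proof (cases "nbhd_e (Cp X) (Cp_zero X) (last us)")
    case True then show ?thesis using cover[OF True, of "real (length us)"] unfolding P_def by blast
  next
    case False then show ?thesis unfolding P_def by (intro exI[of _ "{}"]) auto
  qed
  have sig: "P us (\<sigma> us)" for us unfolding \<sigma>_def by (rule someI_ex[OF ex])
  show ?thesis unfolding strictly_H_bounded_def
  proof (intro exI conjI allI impI ballI)
    show "two_strategy (Cp X) (Cp_zero X) \<sigma>" unfolding two_strategy_def using sig unfolding P_def by simp
    fix U :: "nat \<Rightarrow> ('a \<Rightarrow> real^'n) set" and f :: "'a \<Rightarrow> real^'n"
    assume U: "\<forall>n. nbhd_e (Cp X) (Cp_zero X) (U n)" and f: "f \<in> topspace (Cp X)"
    have "continuous_map X euclideanreal (\<lambda>x. norm (f x))"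
      using f by (auto simp: topspace_Cp intro: continuous_map_norm)
    then have "bounded ((\<lambda>x. norm (f x)) ` topspace X)" using assms by (simp add: pseudocompact_def)
    then obtain b where b: "\<forall>x\<in>topspace X. norm (f x) \<le> b" by (auto simp: bounded_iff)
    obtain N :: nat where N: "b \<le> real N" using real_arch_simple by blast
    show "\<forall>\<^sub>F n in sequentially. f \<in> set_op (Cp_add X) (\<sigma> (map U [0..<Suc n])) (U n)"
      unfolding eventually_sequentially
    proof (intro exI allI impI)
      fix n assume n: "N \<le> n"
      have "\<forall>x\<in>topspace X. norm (f x) \<le> real (length (map U [0..<Suc n]))"
      proof
        fix x assume "x \<in> topspace X"
        then have "norm (f x) \<le> b" using b by blast
        moreover have "real N \<le> real (Suc n)" using n by simp
        ultimately show "norm (f x) \<le> real (length (map U [0..<Suc n]))" using N by simp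
      qed
      moreover have "last (map U [0..<Suc n]) = U n" by (simp add: last_map)
      ultimately show "f \<in> set_op (Cp_add X) (\<sigma> (map U [0..<Suc n])) (U n)"
        using sig[of "map U [0..<Suc n]"] U[rule_format, of n] f unfolding P_def by metis
    qed
  qed
qed

lemma M_pseudo:
  assumes M: "M_bounded (Cp X :: ('a \<Rightarrow> real^'n) topology) (Cp_add X) (Cp_zero X)"
  shows "pseudocompact X"
  unfolding pseudocompact_def
proof (intro allI impI, rule ccontr)
  fix f assume f: "continuous_map X euclideanreal f" "\<not> bounded (f ` topspace X)"
  have "\<forall>n::nat. \<exists>x\<in>topspace X. real n < \<bar>f x\<bar>"
  proof
    fix n :: nat
    show "\<exists>x\<in>topspace X. real n < \<bar>f x\<bar>"
    proof (rule ccontr)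
      assume "\<not> ?thesis"
      then have "\<forall>y\<in>f ` topspace X. norm y \<le> real n" by auto
      then show False using f(2) by (auto simp: bounded_iff)
    qed
  qed
  then obtain xs where xs: "\<And>n. xs n \<in> topspace X" "\<And>n. real n < \<bar>f (xs n)\<bar>" by metis
  define t where "t n = \<bar>f (xs n)\<bar>" for n
  define U :: "nat \<Rightarrow> ('a \<Rightarrow> real^'n) set"
    where "U n = {g\<in>topspace (Cp X). norm (g (xs n)) < 1}" for n
  have Un: "\<forall>n. nbhd_e (Cp X) (Cp_zero X) (U n)"
  proof
    fix n
    have "open {v::real^'n. norm v < 1}"
      by (rule open_Collect_less) (intro continuous_intros)+
    then show "nbhd_e (Cp X) (Cp_zero X) (U n)"
      unfolding U_def by (rule nbhd_eval[OF xs(1)]) simp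
  qed
  obtain A where A: "\<forall>n. finite (A n) \<and> A n \<subseteq> topspace (Cp X)"
      "topspace (Cp X) = (\<Union>n. set_op (Cp_add X) (A n) (U n))"
    using M[unfolded M_bounded_def, THEN spec[of _ U], THEN mp, OF Un] by (elim exE conjE) (rule that)
  define c where "c n = 1 + Max (insert 0 ((\<lambda>a. norm (a (xs n))) ` A n))" for n
  have cge: "norm (a (xs n)) + 1 \<le> c n" if "a \<in> A n" for a n
    unfolding c_def using A(1) that by (simp add: Max_ge)
  have c0: "0 \<le> c n" for n
  proof -
    have "0 \<le> Max (insert 0 ((\<lambda>a. norm (a (xs n))) ` A n))" using A(1) by (simp add: Max_ge)
    then show ?thesis by (simp add: c_def)
  qed
  define tm where "tm n s = c n * max 0 (min 1 (s - t n + 1))" for n s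
  define \<psi> where "\<psi> s = (\<Sum>n<nat \<lceil>s\<rceil> + 2. tm n s)" for s
  have tm0: "tm n s = 0" if "s + 1 \<le> real n" for n s
  proof -
    have "s - t n + 1 < 0" using xs(2)[of n] that by (simp add: t_def)
    then show ?thesis by (simp add: tm_def)
  qed
  have tmnn: "0 \<le> tm n s" for n s using c0 by (simp add: tm_def)
  have sumeq0: "(\<Sum>n<b. tm n s) = (\<Sum>n<a. tm n s)" if "a \<le> b" "s + 1 \<le> real a" for a b s
    by (rule sum.mono_neutral_right) (use that tm0 in auto)
  have sumeq: "(\<Sum>n<a. tm n s) = (\<Sum>n<b. tm n s)" if "s + 1 \<le> real a" "s + 1 \<le> real b" for a b s
  proof (cases "a \<le> b")
    case True then show ?thesis using sumeq0[OF True that(1)] by simp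
  next
    case False then show ?thesis using sumeq0[of b a s] that by simp
  qed
  have tmc: "continuous_on UNIV (tm n)" for n
    unfolding tm_def[abs_def] by (intro continuous_intros)
  have cont: "continuous_on UNIV \<psi>"
    unfolding continuous_on_eq_continuous_at[OF open_UNIV]
  proof
    fix t0 :: real
    define m where "m = nat \<lceil>t0\<rceil> + 3"
    define S where "S = {s::real. s < real m - 1}"
    have oS: "open S" unfolding S_def by (rule open_Collect_less) (intro continuous_intros)+
    have t0S: "t0 \<in> S" unfolding S_def m_def using real_nat_ceiling_ge[of t0] by simp
    have "continuous_on S (\<lambda>s. \<Sum>n<m. tm n s)"
      by (intro continuous_intros continuous_on_subset[OF tmc]) auto
    moreover have "\<psi> s = (\<Sum>n<m. tm n s)" if "s \<in> S" for s
      unfolding \<psi>_def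
    proof (rule sumeq)
      show "s + 1 \<le> real (nat \<lceil>s\<rceil> + 2)" using real_nat_ceiling_ge[of s] by simp
      show "s + 1 \<le> real m" using that unfolding S_def by simp
    qed
    ultimately have "continuous_on S \<psi>" using continuous_on_cong[of S S \<psi> "\<lambda>s. \<Sum>n<m. tm n s"] by simp
    then show "isCont \<psi> t0" using continuous_on_eq_continuous_at[OF oS] t0S by blast
  qed
  have psi_ge: "c n \<le> \<psi> (t n)" for n
  proof -
    have "tm n (t n) = c n" by (simp add: tm_def)
    moreover have "real n < real (nat \<lceil>t n\<rceil>)"
      using xs(2)[of n] real_nat_ceiling_ge[of "t n"] unfolding t_def by linarith
    then have "n < nat \<lceil>t n\<rceil>" by (simp only: of_nat_less_iff)
    then have "n \<in> {..<nat \<lceil>t n\<rceil> + 2}" by simp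
    ultimately show ?thesis unfolding \<psi>_def using member_le_sum[of n "{..<nat \<lceil>t n\<rceil> + 2}" "\<lambda>k. tm k (t n)"] tmnn
      by simp
  qed
  obtain i0 :: 'n where True by simp
  define v :: "real^'n" where "v = axis i0 1"
  define g :: "'a \<Rightarrow> real^'n" where "g = restrict (\<lambda>x. \<psi> \<bar>f x\<bar> *\<^sub>R v) (topspace X)"
  have "continuous_on UNIV (\<lambda>r. \<psi> r *\<^sub>R v)"
    by (intro continuous_intros continuous_on_subset[OF cont]) auto
  then have "continuous_map X euclidean ((\<lambda>r. \<psi> r *\<^sub>R v) \<circ> (\<lambda>x. \<bar>f x\<bar>))"
    by (intro continuous_map_compose[of _ euclidean] continuous_map_real_abs f(1)) simp
  then have "continuous_map X euclidean g"
    unfolding g_def by (rule continuous_map_eq) simp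
  then have gT: "g \<in> topspace (Cp X)" by (simp add: topspace_Cp g_def)
  then obtain m a u where amu: "a \<in> A m" "u \<in> U m" "g = Cp_add X a u"
  proof -
    from gT A(2) obtain m where "g \<in> set_op (Cp_add X) (A m) (U m)" by auto
    then show ?thesis using that unfolding set_op_def by blast
  qed
  have "g (xs m) = a (xs m) + u (xs m)" using amu(3) xs(1) by (simp add: Cp_add_def)
  then have "norm (g (xs m)) \<le> norm (a (xs m)) + norm (u (xs m))" by (simp add: norm_triangle_ineq)
  also have "\<dots> < norm (a (xs m)) + 1" using amu(2) by (simp add: U_def)
  also have "\<dots> \<le> c m" using cge[OF amu(1)] .
  also have "\<dots> \<le> \<psi> (t m)" by (rule psi_ge)
  also have "\<dots> \<le> norm (g (xs m))" using xs(1) by (simp add: g_def v_def t_def)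
  finally show False by simp
qed

lemma Romega:
  assumes z: "z \<in> topspace Z"
  shows "\<not> H_bounded (Cp Z :: ('c \<Rightarrow> (nat \<Rightarrow> real)) topology) (Cp_add Z) (Cp_zero Z)"
proof
  assume H: "H_bounded (Cp Z :: ('c \<Rightarrow> (nat \<Rightarrow> real)) topology) (Cp_add Z) (Cp_zero Z)"
  define U :: "nat \<Rightarrow> ('c \<Rightarrow> (nat \<Rightarrow> real)) set"
    where "U n = {g\<in>topspace (Cp Z). \<bar>g z n\<bar> < 1}" for n
  have Un: "\<forall>n. nbhd_e (Cp Z) (Cp_zero Z) (U n)"
  proof
    fix n
    have "continuous_on UNIV (\<lambda>v::nat\<Rightarrow>real. v n)" by simp
    then have "continuous_on UNIV (\<lambda>v::nat\<Rightarrow>real. \<bar>v n\<bar>)" by (rule continuous_on_rabs)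
    then have "open {v::nat\<Rightarrow>real. \<bar>v n\<bar> < 1}"
      by (rule open_Collect_less) (intro continuous_intros)
    then show "nbhd_e (Cp Z) (Cp_zero Z) (U n)"
      unfolding U_def by (rule nbhd_eval[OF z]) simp
  qed
  obtain A where A: "\<forall>n. finite (A n) \<and> A n \<subseteq> topspace (Cp Z)"
      "\<forall>x\<in>topspace (Cp Z). \<forall>\<^sub>F n in sequentially. x \<in> set_op (Cp_add Z) (A n) (U n)"
    using H[unfolded H_bounded_def, THEN spec[of _ U], THEN mp, OF Un] by (elim exE conjE) (rule that)
  define c :: "nat \<Rightarrow> real" where "c n = 1 + Max (insert 0 ((\<lambda>a. \<bar>a z n\<bar>) ` A n))" for n
  have cge: "\<bar>a z n\<bar> + 1 \<le> c n" if "a \<in> A n" for a n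
    unfolding c_def using A(1) that by (simp add: Max_ge)
  define g :: "'c \<Rightarrow> (nat \<Rightarrow> real)" where "g = restrict (\<lambda>_. c) (topspace Z)"
  have "continuous_map Z euclidean (\<lambda>_. c)" by simp
  then have "continuous_map Z euclidean g" unfolding g_def by (rule continuous_map_eq) simp
  then have gT: "g \<in> topspace (Cp Z)" by (simp add: topspace_Cp g_def)
  then have "\<forall>\<^sub>F n in sequentially. g \<in> set_op (Cp_add Z) (A n) (U n)" using A(2) by blast
  then obtain m where "g \<in> set_op (Cp_add Z) (A m) (U m)" unfolding eventually_sequentially by blast
  then obtain a u where amu: "a \<in> A m" "u \<in> U m" "g = Cp_add Z a u"
    unfolding set_op_def by blast
  have "g z m = a z m + u z m" using amu(3) z by (simp add: Cp_add_def)
  moreover have "g z m = c m" using z by (simp add: g_def)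
  moreover have "\<bar>u z m\<bar> < 1" using amu(2) by (simp add: U_def)
  moreover note cge[OF amu(1)]
  ultimately show False by linarith
qed

lemma sH_H:
  fixes T :: "'g topology"
  assumes "strictly_H_bounded T op e"
  shows "H_bounded T op e"
proof -
  obtain \<sigma> where s: "two_strategy T e \<sigma>"
    "\<forall>U. (\<forall>n. nbhd_e T e (U n)) \<longrightarrow> (\<forall>x\<in>topspace T.
        eventually (\<lambda>n. x \<in> set_op op (\<sigma> (map U [0..<Suc n])) (U n)) sequentially)"
    using assms unfolding strictly_H_bounded_def by blast
  show ?thesis unfolding H_bounded_def
  proof (intro allI impI)
    fix U :: "nat \<Rightarrow> 'g set" assume U: "\<forall>n. nbhd_e T e (U n)"
    have "finite (\<sigma> (map U [0..<Suc n])) \<and> \<sigma> (map U [0..<Suc n]) \<subseteq> topspace T" for n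
    proof -
      have "\<forall>u\<in>set (map U [0..<Suc n]). nbhd_e T e u" using U by auto
      then show ?thesis using s(1) unfolding two_strategy_def by blast
    qed
    then show "\<exists>A. (\<forall>n. finite (A n) \<and> A n \<subseteq> topspace T) \<and>
        (\<forall>x\<in>topspace T. \<forall>\<^sub>F n in sequentially. x \<in> set_op op (A n) (U n))"
      using s(2)[THEN spec[of _ U], THEN mp, OF U] by (intro exI[of _ "\<lambda>n. \<sigma> (map U [0..<Suc n])"] conjI) simp_all
  qed
qed

lemma sM_M:
  fixes T :: "'g topology"
  assumes "strictly_M_bounded T op e"
  shows "M_bounded T op e"
proof -
  obtain \<sigma> where s: "two_strategy T e \<sigma>"
    "\<forall>U. (\<forall>n. nbhd_e T e (U n)) \<longrightarrow>
        topspace T = (\<Union>n. set_op op (\<sigma> (map U [0..<Suc n])) (U n))"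
    using assms unfolding strictly_M_bounded_def by blast
  show ?thesis unfolding M_bounded_def
  proof (intro allI impI)
    fix U :: "nat \<Rightarrow> 'g set" assume U: "\<forall>n. nbhd_e T e (U n)"
    define A where "A n = \<sigma> (map U [0..<Suc n])" for n
    have fin: "finite (A n) \<and> A n \<subseteq> topspace T" for n
    proof -
      have "\<forall>u\<in>set (map U [0..<Suc n]). nbhd_e T e u" using U by auto
      then show ?thesis using s(1) unfolding two_strategy_def A_def by blast
    qed
    have eq: "topspace T = (\<Union>n. set_op op (A n) (U n))"
      unfolding A_def using s(2)[THEN spec[of _ U], THEN mp, OF U] .
    have "(\<forall>n. finite (A n) \<and> A n \<subseteq> topspace T) \<and> topspace T = (\<Union>n. set_op op (A n) (U n))"
      using fin eq by blast
    then show "\<exists>A. (\<forall>n. finite (A n) \<and> A n \<subseteq> topspace T) \<and>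
        topspace T = (\<Union>n. set_op op (A n) (U n))"
      by (rule exI[of _ A])
  qed
qed

lemma nbhd_sub: "nbhd_e T e U \<Longrightarrow> U \<subseteq> topspace T" by (simp add: nbhd_e_def)

lemma ev_union:
  fixes A U :: "nat \<Rightarrow> ('a \<Rightarrow> 'b::real_normed_vector) set"
  assumes "\<forall>n. A n \<subseteq> topspace (Cp X)" "\<forall>n. nbhd_e (Cp X) (Cp_zero X) (U n)"
    "\<forall>x\<in>topspace (Cp X). \<forall>\<^sub>F n in sequentially. x \<in> set_op (Cp_add X) (A n) (U n)"
  shows "topspace (Cp X) = (\<Union>n. set_op (Cp_add X) (A n) (U n))"
proof
  show "topspace (Cp X) \<subseteq> (\<Union>n. set_op (Cp_add X) (A n) (U n))"
  proof
    fix x :: "'a \<Rightarrow> 'b" assume "x \<in> topspace (Cp X)"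
    then have "\<forall>\<^sub>F n in sequentially. x \<in> set_op (Cp_add X) (A n) (U n)" using assms(3) by blast
    then obtain N where "x \<in> set_op (Cp_add X) (A N) (U N)" unfolding eventually_sequentially by blast
    then show "x \<in> (\<Union>n. set_op (Cp_add X) (A n) (U n))" by blast
  qed
  show "(\<Union>n. set_op (Cp_add X) (A n) (U n)) \<subseteq> topspace (Cp X)"
  proof (rule UN_least)
    fix n
    show "set_op (Cp_add X) (A n) (U n) \<subseteq> topspace (Cp X)"
      by (rule set_op_sub[OF assms(1)[rule_format] nbhd_sub[OF assms(2)[rule_format]]])
  qed
qed

lemma H_M:
  assumes "H_bounded (Cp X :: ('a \<Rightarrow> 'b::real_normed_vector) topology) (Cp_add X) (Cp_zero X)"
  shows "M_bounded (Cp X :: ('a \<Rightarrow> 'b) topology) (Cp_add X) (Cp_zero X)"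
  unfolding M_bounded_def
proof (intro allI impI)
  fix U :: "nat \<Rightarrow> ('a \<Rightarrow> 'b) set" assume U: "\<forall>n. nbhd_e (Cp X) (Cp_zero X) (U n)"
  obtain A where A: "\<forall>n. finite (A n) \<and> A n \<subseteq> topspace (Cp X)"
      "\<forall>x\<in>topspace (Cp X). \<forall>\<^sub>F n in sequentially. x \<in> set_op (Cp_add X) (A n) (U n)"
    using assms[unfolded H_bounded_def, THEN spec[of _ U], THEN mp, OF U] by (elim exE conjE) (rule that)
  have "topspace (Cp X) = (\<Union>n. set_op (Cp_add X) (A n) (U n))"
    using A(1) by (intro ev_union[OF _ U A(2)]) blast
  then show "\<exists>A. (\<forall>n. finite (A n) \<and> A n \<subseteq> topspace (Cp X)) \<and>
        topspace (Cp X) = (\<Union>n. set_op (Cp_add X) (A n) (U n))" using A(1) by blast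
qed

lemma sH_sM:
  assumes "strictly_H_bounded (Cp X :: ('a \<Rightarrow> 'b::real_normed_vector) topology) (Cp_add X) (Cp_zero X)"
  shows "strictly_M_bounded (Cp X :: ('a \<Rightarrow> 'b) topology) (Cp_add X) (Cp_zero X)"
proof -
  obtain \<sigma> where s: "two_strategy (Cp X :: ('a \<Rightarrow> 'b) topology) (Cp_zero X) \<sigma>"
    "\<forall>U. (\<forall>n. nbhd_e (Cp X) (Cp_zero X) (U n)) \<longrightarrow> (\<forall>x\<in>topspace (Cp X).
        eventually (\<lambda>n. x \<in> set_op (Cp_add X) (\<sigma> (map U [0..<Suc n])) (U n)) sequentially)"
    using assms unfolding strictly_H_bounded_def by blast
  show ?thesis unfolding strictly_M_bounded_def
  proof (intro exI conjI allI impI)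
    show "two_strategy (Cp X) (Cp_zero X) \<sigma>" by (rule s(1))
    fix U :: "nat \<Rightarrow> ('a \<Rightarrow> 'b) set" assume U: "\<forall>n. nbhd_e (Cp X) (Cp_zero X) (U n)"
    have "\<sigma> (map U [0..<Suc n]) \<subseteq> topspace (Cp X)" for n
    proof -
      have "\<forall>u\<in>set (map U [0..<Suc n]). nbhd_e (Cp X) (Cp_zero X) u" using U by auto
      then show ?thesis using s(1) unfolding two_strategy_def by blast
    qed
    then have sub: "\<forall>n. \<sigma> (map U [0..<Suc n]) \<subseteq> topspace (Cp X)" by blast
    show "topspace (Cp X) = (\<Union>n. set_op (Cp_add X) (\<sigma> (map U [0..<Suc n])) (U n))"
      by (rule ev_union[OF sub U s(2)[THEN spec[of _ U], THEN mp, OF U]])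
  qed
qed

theorem mainTheorem10:
  fixes X :: "'a topology"
  assumes "tychonoff_space X"
  shows "(strictly_H_bounded (Cp X :: ('a \<Rightarrow> real^'n) topology) (Cp_add X) (Cp_zero X)
            \<longleftrightarrow> H_bounded (Cp X :: ('a \<Rightarrow> real^'n) topology) (Cp_add X) (Cp_zero X))
       \<and> (H_bounded (Cp X :: ('a \<Rightarrow> real^'n) topology) (Cp_add X) (Cp_zero X)
            \<longleftrightarrow> strictly_M_bounded (Cp X :: ('a \<Rightarrow> real^'n) topology) (Cp_add X) (Cp_zero X))
       \<and> (strictly_M_bounded (Cp X :: ('a \<Rightarrow> real^'n) topology) (Cp_add X) (Cp_zero X)
            \<longleftrightarrow> M_bounded (Cp X :: ('a \<Rightarrow> real^'n) topology) (Cp_add X) (Cp_zero X))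
       \<and> (M_bounded (Cp X :: ('a \<Rightarrow> real^'n) topology) (Cp_add X) (Cp_zero X)
            \<longleftrightarrow> pseudocompact X)
       \<and> (\<forall>Z :: 'c topology. tychonoff_space Z \<and> topspace Z \<noteq> {} \<longrightarrow>
            \<not> H_bounded (Cp Z :: ('c \<Rightarrow> (nat \<Rightarrow> real)) topology) (Cp_add Z) (Cp_zero Z))"
proof -
  let ?sH = "strictly_H_bounded (Cp X :: ('a \<Rightarrow> real^'n) topology) (Cp_add X) (Cp_zero X)"
  let ?H = "H_bounded (Cp X :: ('a \<Rightarrow> real^'n) topology) (Cp_add X) (Cp_zero X)"
  let ?sM = "strictly_M_bounded (Cp X :: ('a \<Rightarrow> real^'n) topology) (Cp_add X) (Cp_zero X)"
  let ?M = "M_bounded (Cp X :: ('a \<Rightarrow> real^'n) topology) (Cp_add X) (Cp_zero X)"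
  have 1: "pseudocompact X \<Longrightarrow> ?sH" by (rule pseudo_sH)
  have 2: "?sH \<Longrightarrow> ?H" by (rule sH_H)
  have 3: "?sH \<Longrightarrow> ?sM" by (rule sH_sM)
  have 4: "?H \<Longrightarrow> ?M" by (rule H_M)
  have 5: "?sM \<Longrightarrow> ?M" by (rule sM_M)
  have 6: "?M \<Longrightarrow> pseudocompact X" by (rule M_pseudo)
  have 7: "\<forall>Z :: 'c topology. tychonoff_space Z \<and> topspace Z \<noteq> {} \<longrightarrow>
            \<not> H_bounded (Cp Z :: ('c \<Rightarrow> (nat \<Rightarrow> real)) topology) (Cp_add Z) (Cp_zero Z)"
  proof (intro allI impI)
    fix Z :: "'c topology" assume "tychonoff_space Z \<and> topspace Z \<noteq> {}"
    then obtain z where "z \<in> topspace Z" by blast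
    then show "\<not> H_bounded (Cp Z :: ('c \<Rightarrow> (nat \<Rightarrow> real)) topology) (Cp_add Z) (Cp_zero Z)"
      by (rule Romega)
  qed
  show ?thesis using 1 2 3 4 5 6 7 by blast
qed

end
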